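(* Let $R$ and $S$ be commutative rings with identity, $f:R\to S$ a ring homomorphism, and $J$ a nonzero proper ideal of $S$. (1) If $J\subseteq\operatorname{Jac}(S)$, then $R\bowtie^f J$ is a pm-ring if and only if $R$ is a pm-ring. (2) For any $R$-module $M$, the trivial extension $R\ltimes M$ is a pm-ring if and only if $R$ is a pm-ring.
   Context: $R\bowtie^f J:=\{(r,f(r)+j)\mid r\in R,\ j\in J\}$, a subring of $R\times S$. $\operatorname{Jac}(S)$ is the Jacobson radical of $S$. The trivial extension $R\ltimes M$ is the ring $R\oplus M$ with multiplication $(r,m)(r',m')=(rr',rm'+r'm)$. A commutative ring is a pm-ring if every prime ideal is contained in a unique maximal ideal. *)

theory Defs
  imports "HOL-Algebra.Algebra"
begin

definition pm_ring :: "('a, 'b) ring_scheme \<Rightarrow> bool" where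
  "pm_ring R \<longleftrightarrow> (\<forall>P. primeideal P R \<longrightarrow> (\<exists>!N. maximalideal N R \<and> P \<subseteq> N))"

definition Jac :: "('a, 'b) ring_scheme \<Rightarrow> 'a set" where
  "Jac S = carrier S \<inter> \<Inter>{N. maximalideal N S}"

definition amalg :: "('a, 'c) ring_scheme \<Rightarrow> ('b, 'd) ring_scheme \<Rightarrow> ('a \<Rightarrow> 'b) \<Rightarrow> 'b set
    \<Rightarrow> ('a \<times> 'b) ring" where
  "amalg R S f J =
    \<lparr> carrier = {(r, f r \<oplus>\<^bsub>S\<^esub> j) | r j. r \<in> carrier R \<and> j \<in> J},
      monoid.mult = (\<lambda>x y. (fst x \<otimes>\<^bsub>R\<^esub> fst y, snd x \<otimes>\<^bsub>S\<^esub> snd y)),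
      monoid.one = (\<one>\<^bsub>R\<^esub>, \<one>\<^bsub>S\<^esub>),
      ring.zero = (\<zero>\<^bsub>R\<^esub>, \<zero>\<^bsub>S\<^esub>),
      ring.add = (\<lambda>x y. (fst x \<oplus>\<^bsub>R\<^esub> fst y, snd x \<oplus>\<^bsub>S\<^esub> snd y)) \<rparr>"

definition triv_ext :: "('a, 'c) ring_scheme \<Rightarrow> ('a, 'b) module \<Rightarrow> ('a \<times> 'b) ring" where
  "triv_ext R M =
    \<lparr> carrier = carrier R \<times> carrier M,
      monoid.mult = (\<lambda>x y. (fst x \<otimes>\<^bsub>R\<^esub> fst y,
                     (fst x \<odot>\<^bsub>M\<^esub> snd y) \<oplus>\<^bsub>M\<^esub> (fst y \<odot>\<^bsub>M\<^esub> snd x))),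
      monoid.one = (\<one>\<^bsub>R\<^esub>, \<zero>\<^bsub>M\<^esub>),
      ring.zero = (\<zero>\<^bsub>R\<^esub>, \<zero>\<^bsub>M\<^esub>),
      ring.add = (\<lambda>x y. (fst x \<oplus>\<^bsub>R\<^esub> fst y, snd x \<oplus>\<^bsub>M\<^esub> snd y)) \<rparr>"

end

theory Submission
  imports Defs
begin


lemma (in ring) ideal_simpleI:
  assumes "I \<subseteq> carrier R" "\<zero> \<in> I"
    and "\<And>a b. a \<in> I \<Longrightarrow> b \<in> I \<Longrightarrow> a \<oplus> b \<in> I"
    and "\<And>a x. a \<in> I \<Longrightarrow> x \<in> carrier R \<Longrightarrow> x \<otimes> a \<in> I"
    and "\<And>a x. a \<in> I \<Longrightarrow> x \<in> carrier R \<Longrightarrow> a \<otimes> x \<in> I"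
  shows "ideal I R"
proof -
  have neg: "\<ominus> a \<in> I" if a: "a \<in> I" for a
  proof -
    have ac: "a \<in> carrier R" using assms(1) a by blast
    have "\<ominus> \<one> \<otimes> a \<in> I" using assms(4)[OF a] by simp
    moreover have "\<ominus> \<one> \<otimes> a = \<ominus> a" using ac by (simp add: l_minus)
    ultimately show ?thesis by simp
  qed
  have "subgroup I (add_monoid R)"
    apply (rule add.subgroupI)
    subgoal using assms(1) by simp
    subgoal using assms(2) by blast
    subgoal for a using neg[of a] by (simp add: a_inv_def)
    subgoal for a b using assms(3)[of a b] by simp
    done
  then show ?thesis
    apply (rule idealI[OF ring_axioms])
    using assms(4,5) by blast+
qed

lemma (in ring) krull:
  assumes "ideal I R" "I \<noteq> carrier R"
  shows "\<exists>M. maximalideal M R \<and> I \<subseteq> M"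
proof -
  define A where "A = {J. ideal J R \<and> I \<subseteq> J \<and> \<one> \<notin> J}"
  have IA: "I \<in> A" using assms ideal.one_imp_carrier unfolding A_def by blast
  have ch: "\<Union>C \<in> A" if ne: "C \<noteq> {}" and chn: "subset.chain A C" for C
  proof -
    from chn have CA: "C \<subseteq> A" and lin: "\<And>U V. U \<in> C \<Longrightarrow> V \<in> C \<Longrightarrow> U \<subseteq> V \<or> V \<subseteq> U"
      unfolding subset_chain_def by auto
    have CI: "ideal U R" "I \<subseteq> U" "\<one> \<notin> U" if "U \<in> C" for U
      using CA that unfolding A_def by auto
    obtain U0 where U0: "U0 \<in> C" using ne by blast
    have "ideal (\<Union>C) R"
    proof (rule ideal_simpleI)
      show "\<Union>C \<subseteq> carrier R"
      proof
        fix a assume "a \<in> \<Union>C"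
        then obtain U where "U \<in> C" "a \<in> U" by blast
        then show "a \<in> carrier R" using CI(1) ideal.Icarr by metis
      qed
      have "\<zero> \<in> U0" using CI(1)[OF U0] additive_subgroup.zero_closed ideal.axioms(1) by metis
      then show "\<zero> \<in> \<Union>C" using U0 by blast
      fix a b assume a: "a \<in> \<Union>C" and b: "b \<in> \<Union>C"
      then obtain U1 V1 where XY: "U1 \<in> C" "V1 \<in> C" "a \<in> U1" "b \<in> V1" by blast
      show "a \<oplus> b \<in> \<Union>C"
      proof (cases "U1 \<subseteq> V1")
        case True
        then have "a \<in> V1" using XY by blast
        then have "a \<oplus> b \<in> V1" using XY CI(1) additive_subgroup.a_closed ideal.axioms(1) by metis
        then show ?thesis using XY by blast
      next
        case False
        then have "V1 \<subseteq> U1" using lin XY by blast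
        then have "b \<in> U1" using XY by blast
        then have "a \<oplus> b \<in> U1" using XY CI(1) additive_subgroup.a_closed ideal.axioms(1) by metis
        then show ?thesis using XY by blast
      qed
    next
      fix a x assume ax: "a \<in> \<Union>C" "x \<in> carrier R"
      then obtain U1 where U1: "U1 \<in> C" "a \<in> U1" by blast
      have "x \<otimes> a \<in> U1" using CI(1)[OF U1(1)] U1(2) ax(2) ideal.I_l_closed by metis
      then show "x \<otimes> a \<in> \<Union>C" using U1 by blast
      have "a \<otimes> x \<in> U1" using CI(1)[OF U1(1)] U1(2) ax(2) ideal.I_r_closed by metis
      then show "a \<otimes> x \<in> \<Union>C" using U1 by blast
    qed
    moreover have "I \<subseteq> \<Union>C" using U0 CI(2) by blast
    moreover have "\<one> \<notin> \<Union>C" using CI(3) by blast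
    ultimately show ?thesis unfolding A_def by blast
  qed
  obtain M where M: "M \<in> A" and Mmax: "\<And>U1. U1 \<in> A \<Longrightarrow> M \<subseteq> U1 \<Longrightarrow> U1 = M"
    using subset_Zorn_nonempty[of A] IA ch by blast
  have MA: "ideal M R" "I \<subseteq> M" "\<one> \<notin> M" using M unfolding A_def by auto
  have "maximalideal M R"
  proof (rule maximalidealI)
    show "ideal M R" by (rule MA(1))
    show "carrier R \<noteq> M" using MA(3) by auto
    fix J assume J: "ideal J R" "M \<subseteq> J" "J \<subseteq> carrier R"
    show "J = M \<or> J = carrier R"
    proof (cases "\<one> \<in> J")
      case True then show ?thesis using J ideal.one_imp_carrier by blast
    next
      case False
      then have "J \<in> A" using J MA unfolding A_def by auto
      then show ?thesis using J Mmax by blast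
    qed
  qed
  then show ?thesis using MA by blast
qed

lemma (in cring) jac_unit:
  assumes "j \<in> Jac R"
  shows "\<exists>u\<in>carrier R. (\<one> \<oplus> j) \<otimes> u = \<one>"
proof -
  have jc: "j \<in> carrier R" using assms by (simp add: Jac_def)
  let ?x = "\<one> \<oplus> j"
  have xc: "?x \<in> carrier R" using jc by simp
  show ?thesis
  proof (cases "PIdl ?x = carrier R")
    case True
    then have "\<one> \<in> PIdl ?x" by simp
    then obtain y where "y \<in> carrier R" "\<one> = y \<otimes> ?x" by (auto simp: cgenideal_def)
    then show ?thesis using xc m_comm by metis
  next
    case False
    then obtain M where M: "maximalideal M R" "PIdl ?x \<subseteq> M"
      using krull cgenideal_ideal[OF xc] by blast
    have "?x \<in> M" using M cgenideal_self[OF xc] by blast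
    moreover have "j \<in> M" using assms M by (auto simp: Jac_def)
    ultimately have "?x \<ominus> j \<in> M"
    proof -
      interpret Mi: maximalideal M R by (rule M(1))
      assume "?x \<in> M" "j \<in> M"
      then show ?thesis by (simp add: minus_eq Mi.a_closed Mi.a_inv_closed)
    qed
    moreover have "?x \<ominus> j = \<one>" using jc by algebra
    ultimately have "\<one> \<in> M" by simp
    then show ?thesis using M(1) maximalideal.I_notcarr ideal.one_imp_carrier maximalideal.axioms(1) by metis
  qed
qed



lemma pm_transfer:
  fixes A :: "('x, 'c) ring_scheme" and R :: "('y, 'd) ring_scheme"
    and p :: "'x \<Rightarrow> 'y" and s :: "'y \<Rightarrow> 'x"
  assumes A: "cring A" and R: "cring R" and hp: "p \<in> ring_hom A R" and hs: "s \<in> ring_hom R A"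
    and sec: "\<And>r. r \<in> carrier R \<Longrightarrow> p (s r) = r"
    and unit: "\<And>a. a \<in> carrier A \<Longrightarrow> p a = \<one>\<^bsub>R\<^esub> \<Longrightarrow> \<exists>b\<in>carrier A. a \<otimes>\<^bsub>A\<^esub> b = \<one>\<^bsub>A\<^esub>"
  shows "pm_ring A \<longleftrightarrow> pm_ring R"
proof -
  interpret A: cring A by (rule A)
  interpret R: cring R by (rule R)
  interpret P: ring_hom_ring A R p by (rule ring_hom_ringI2[OF A.ring_axioms R.ring_axioms hp])
  interpret S: ring_hom_ring R A s by (rule ring_hom_ringI2[OF R.ring_axioms A.ring_axioms hs])
  define vim where "vim m = {a \<in> carrier A. p a \<in> m}" for m
  have img_ideal: "ideal (p ` I) R" if I: "ideal I A" for I
  proof -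
    interpret I: ideal I A by (rule I)
    show ?thesis
  proof (rule R.ideal_simpleI)
    show "p ` I \<subseteq> carrier R" using I.Icarr by auto
    show "\<zero>\<^bsub>R\<^esub> \<in> p ` I" by (intro image_eqI[of _ p "\<zero>\<^bsub>A\<^esub>"]) simp_all
    fix a b assume "a \<in> p ` I" "b \<in> p ` I"
    then obtain a' b' where "a' \<in> I" "b' \<in> I" "a = p a'" "b = p b'" by blast
    then show "a \<oplus>\<^bsub>R\<^esub> b \<in> p ` I"
      by (intro image_eqI[of _ p "a' \<oplus>\<^bsub>A\<^esub> b'"]) (simp_all add: I.Icarr I.a_closed)
  next
    fix a x assume ax: "a \<in> p ` I" "x \<in> carrier R"
    then obtain a' where a': "a' \<in> I" "a = p a'" by blast
    have "x \<otimes>\<^bsub>R\<^esub> a = p (s x \<otimes>\<^bsub>A\<^esub> a')"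
      using a' ax(2) I.Icarr sec by simp
    moreover have "s x \<otimes>\<^bsub>A\<^esub> a' \<in> I" using a'(1) ax(2) I.I_l_closed by simp
    ultimately show "x \<otimes>\<^bsub>R\<^esub> a \<in> p ` I" by blast
    have "a \<otimes>\<^bsub>R\<^esub> x = p (a' \<otimes>\<^bsub>A\<^esub> s x)"
      using a' ax(2) I.Icarr sec by simp
    moreover have "a' \<otimes>\<^bsub>A\<^esub> s x \<in> I" using a'(1) ax(2) I.I_r_closed by simp
    ultimately show "a \<otimes>\<^bsub>R\<^esub> x \<in> p ` I" by blast
  qed
  qed
  have unit_ideal: "I = carrier A" if I: "ideal I A" and a: "a \<in> I" "p a = \<one>\<^bsub>R\<^esub>" for I a
  proof -
    interpret I: ideal I A by (rule I)
    obtain b where b: "b \<in> carrier A" "a \<otimes>\<^bsub>A\<^esub> b = \<one>\<^bsub>A\<^esub>" using unit a I.Icarr by blast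
    have "\<one>\<^bsub>A\<^esub> \<in> I" using I.I_r_closed[OF a(1) b(1)] b(2) by simp
    then show ?thesis by (rule I.one_imp_carrier)
  qed
  have img_proper: "p ` I \<noteq> carrier R" if I: "ideal I A" "I \<noteq> carrier A" for I
  proof
    assume "p ` I = carrier R"
    then have "\<one>\<^bsub>R\<^esub> \<in> p ` I" by simp
    then obtain a where "a \<in> I" "p a = \<one>\<^bsub>R\<^esub>" by auto
    then show False using unit_ideal I by blast
  qed
  have vim_ideal: "ideal (vim m) A" if "ideal m R" for m
    unfolding vim_def by (rule P.ideal_vimage[OF that])
  have surj_vim: "p ` vim m = m" if "m \<subseteq> carrier R" for m
  proof
    show "p ` vim m \<subseteq> m" unfolding vim_def by auto
    show "m \<subseteq> p ` vim m"
    proof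
      fix r assume r: "r \<in> m"
      then have "r \<in> carrier R" using that by blast
      then have "s r \<in> vim m" "p (s r) = r" using r sec unfolding vim_def by auto
      then show "r \<in> p ` vim m" by (intro image_eqI[of _ p "s r"]) simp_all
    qed
  qed
  have vim_sub: "N \<subseteq> vim (p ` N)" if "N \<subseteq> carrier A" for N
    using that unfolding vim_def by auto
  have max_vim: "maximalideal (vim m) A" if m: "maximalideal m R" for m
  proof (rule maximalidealI)
    interpret m: maximalideal m R by (rule m)
    show "ideal (vim m) A" by (rule vim_ideal[OF m.is_ideal])
    have "\<one>\<^bsub>R\<^esub> \<notin> m" using m.I_notcarr m.one_imp_carrier by blast
    then have "\<one>\<^bsub>A\<^esub> \<notin> vim m" unfolding vim_def by simp
    then show "carrier A \<noteq> vim m" by blast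
    fix I assume I: "ideal I A" "vim m \<subseteq> I" "I \<subseteq> carrier A"
    have "ideal (p ` I) R" by (rule img_ideal[OF I(1)])
    moreover have "m \<subseteq> p ` I" using surj_vim[OF m.a_subset] I(2) by blast
    moreover have "p ` I \<subseteq> carrier R" using I(3) by auto
    ultimately have "p ` I = m \<or> p ` I = carrier R" using m.I_maximal by blast
    then show "I = vim m \<or> I = carrier A"
    proof
      assume "p ` I = m"
      then have "I \<subseteq> vim m" using vim_sub[OF I(3)] by simp
      then show ?thesis using I(2) by blast
    next
      assume "p ` I = carrier R"
      then show ?thesis using img_proper[OF I(1)] by blast
    qed
  qed
  have max_img: "maximalideal (p ` N) R \<and> N = vim (p ` N)" if N: "maximalideal N A" for N
  proof -
    interpret N: maximalideal N A by (rule N)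
    have pN: "ideal (p ` N) R" by (rule img_ideal[OF N.is_ideal])
    have pNp: "p ` N \<noteq> carrier R" using img_proper[OF N.is_ideal] N.I_notcarr by blast
    have eq: "N = vim (p ` N)"
    proof -
      have "ideal (vim (p ` N)) A" by (rule vim_ideal[OF pN])
      moreover have "vim (p ` N) \<noteq> carrier A"
      proof
        assume "vim (p ` N) = carrier A"
        then have "\<one>\<^bsub>A\<^esub> \<in> vim (p ` N)" by simp
        then have "p \<one>\<^bsub>A\<^esub> \<in> p ` N" unfolding vim_def by blast
        then have "\<one>\<^bsub>R\<^esub> \<in> p ` N" by simp
        then show False using pNp ideal.one_imp_carrier[OF pN] by blast
      qed
      moreover have "vim (p ` N) \<subseteq> carrier A" unfolding vim_def by auto
      ultimately show ?thesis using N.I_maximal vim_sub[OF N.a_subset] by blast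
    qed
    have "maximalideal (p ` N) R"
    proof (rule maximalidealI[OF pN])
      show "carrier R \<noteq> p ` N" using pNp by auto
      fix I assume I: "ideal I R" "p ` N \<subseteq> I" "I \<subseteq> carrier R"
      have "ideal (vim I) A" by (rule vim_ideal[OF I(1)])
      moreover have "N \<subseteq> vim I" using I(2) N.Icarr unfolding vim_def by auto
      moreover have "vim I \<subseteq> carrier A" unfolding vim_def by auto
      ultimately have "vim I = N \<or> vim I = carrier A" using N.I_maximal by blast
      then show "I = p ` N \<or> I = carrier R"
      proof
        assume "vim I = N"
        then have "I = p ` N" using surj_vim[OF I(3)] by simp
        then show ?thesis by blast
      next
        assume "vim I = carrier A"
        then have "I = p ` carrier A" using surj_vim[OF I(3)] by simp
        moreover have "p ` carrier A = carrier R" using surj_vim[of "carrier R"] unfolding vim_def by auto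
        ultimately show ?thesis by blast
      qed
    qed
    then show ?thesis using eq by blast
  qed
  show ?thesis
  proof
    assume pmA: "pm_ring A"
    show "pm_ring R"
      unfolding pm_ring_def
    proof (intro allI impI)
      fix q assume q: "primeideal q R"
      interpret q: primeideal q R by (rule q)
      have "primeideal (vim q) A"
        unfolding vim_def by (rule P.primeideal_vimage[OF A q])
      have "\<exists>!N. maximalideal N A \<and> vim q \<subseteq> N"
        using pmA \<open>primeideal (vim q) A\<close> unfolding pm_ring_def by blast
      then obtain N where N: "maximalideal N A" "vim q \<subseteq> N"
        and Nu: "\<And>N'. maximalideal N' A \<Longrightarrow> vim q \<subseteq> N' \<Longrightarrow> N' = N"
        by blast
      have ex: "maximalideal (p ` N) R \<and> q \<subseteq> p ` N"
        using max_img[OF N(1)] surj_vim[OF q.a_subset] N(2) by blast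
      have un: "m = p ` N" if "maximalideal m R" "q \<subseteq> m" for m
      proof -
        have "maximalideal (vim m) A" by (rule max_vim[OF that(1)])
        moreover have "vim q \<subseteq> vim m" using that(2) unfolding vim_def by auto
        ultimately have "vim m = N" using Nu by blast
        moreover have "p ` vim m = m"
        proof -
          interpret mm: maximalideal m R by (rule that(1))
          show ?thesis by (rule surj_vim[OF mm.a_subset])
        qed
        ultimately show ?thesis by simp
      qed
      show "\<exists>!m. maximalideal m R \<and> q \<subseteq> m" using ex un by blast
    qed
  next
    assume pmR: "pm_ring R"
    show "pm_ring A"
      unfolding pm_ring_def
    proof (intro allI impI)
      fix P assume P: "primeideal P A"
      interpret P': primeideal P A by (rule P)
      define q where "q = {r \<in> carrier R. s r \<in> P}"
      have q: "primeideal q R" unfolding q_def by (rule S.primeideal_vimage[OF R P])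
      have qsub: "q \<subseteq> p ` P"
      proof
        fix r assume "r \<in> q"
        then have "s r \<in> P" "p (s r) = r" unfolding q_def using sec by auto
        then show "r \<in> p ` P" by (intro image_eqI[of _ p "s r"]) simp_all
      qed
      have "\<exists>m. maximalideal m R \<and> p ` P \<subseteq> m"
        by (rule R.krull[OF img_ideal[OF P'.is_ideal] img_proper[OF P'.is_ideal P'.I_notcarr[symmetric]]])
      then obtain m where m: "maximalideal m R" "p ` P \<subseteq> m" by blast
      have ex: "maximalideal (vim m) A \<and> P \<subseteq> vim m"
        using max_vim[OF m(1)] m(2) P'.Icarr unfolding vim_def by auto
      have un: "N1 = N2" if "maximalideal N1 A" "P \<subseteq> N1" "maximalideal N2 A" "P \<subseteq> N2" for N1 N2
      proof -
        have "maximalideal (p ` N1) R" "q \<subseteq> p ` N1" "N1 = vim (p ` N1)"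
          using max_img[OF that(1)] qsub that(2) by auto
        moreover have "maximalideal (p ` N2) R" "q \<subseteq> p ` N2" "N2 = vim (p ` N2)"
          using max_img[OF that(3)] qsub that(4) by auto
        moreover have "\<exists>!m. maximalideal m R \<and> q \<subseteq> m" using pmR q unfolding pm_ring_def by blast
        ultimately have "p ` N1 = p ` N2" by blast
        then show ?thesis using \<open>N1 = vim (p ` N1)\<close> \<open>N2 = vim (p ` N2)\<close> by simp
      qed
      show "\<exists>!N. maximalideal N A \<and> P \<subseteq> N" using ex un by blast
    qed
  qed
qed



lemma amalg_simps:
  "carrier (amalg R S f J) = {(r, f r \<oplus>\<^bsub>S\<^esub> j) | r j. r \<in> carrier R \<and> j \<in> J}"
  "x \<otimes>\<^bsub>amalg R S f J\<^esub> y = (fst x \<otimes>\<^bsub>R\<^esub> fst y, snd x \<otimes>\<^bsub>S\<^esub> snd y)"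
  "x \<oplus>\<^bsub>amalg R S f J\<^esub> y = (fst x \<oplus>\<^bsub>R\<^esub> fst y, snd x \<oplus>\<^bsub>S\<^esub> snd y)"
  "\<one>\<^bsub>amalg R S f J\<^esub> = (\<one>\<^bsub>R\<^esub>, \<one>\<^bsub>S\<^esub>)"
  "\<zero>\<^bsub>amalg R S f J\<^esub> = (\<zero>\<^bsub>R\<^esub>, \<zero>\<^bsub>S\<^esub>)"
  by (simp_all add: amalg_def)

lemma amalg_main:
  fixes R :: "'a ring" and S :: "'b ring" and f :: "'a \<Rightarrow> 'b" and J :: "'b set"
  assumes R: "cring R" and S: "cring S" and hf: "f \<in> ring_hom R S"
    and J: "ideal J S" and JJ: "J \<subseteq> Jac S"
  shows "pm_ring (amalg R S f J) \<longleftrightarrow> pm_ring R"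
proof -
  interpret R: cring R by (rule R)
  interpret S: cring S by (rule S)
  interpret J: ideal J S by (rule J)
  interpret F: ring_hom_cring R S f
    by (rule ring_hom_cringI[OF R S hf])
  define A where "A = amalg R S f J"
  have mem: "x \<in> carrier A \<longleftrightarrow> fst x \<in> carrier R \<and> snd x \<in> carrier S \<and> snd x \<ominus>\<^bsub>S\<^esub> f (fst x) \<in> J" for x
  proof
    assume "x \<in> carrier A"
    then obtain r j where rj: "x = (r, f r \<oplus>\<^bsub>S\<^esub> j)" "r \<in> carrier R" "j \<in> J"
      unfolding A_def amalg_simps by blast
    have jc: "j \<in> carrier S" using rj(3) J.Icarr by blast
    have fr: "f r \<in> carrier S" using rj(2) by simp
    have "f r \<oplus>\<^bsub>S\<^esub> j \<ominus>\<^bsub>S\<^esub> f r = j" using jc fr by algebra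
    then show "fst x \<in> carrier R \<and> snd x \<in> carrier S \<and> snd x \<ominus>\<^bsub>S\<^esub> f (fst x) \<in> J"
      using rj jc fr by simp
  next
    assume h: "fst x \<in> carrier R \<and> snd x \<in> carrier S \<and> snd x \<ominus>\<^bsub>S\<^esub> f (fst x) \<in> J"
    have fr: "f (fst x) \<in> carrier S" using h by simp
    have "snd x = f (fst x) \<oplus>\<^bsub>S\<^esub> (snd x \<ominus>\<^bsub>S\<^esub> f (fst x))" using h fr by algebra
    then have "x = (fst x, f (fst x) \<oplus>\<^bsub>S\<^esub> (snd x \<ominus>\<^bsub>S\<^esub> f (fst x)))" by (metis prod.collapse)
    then show "x \<in> carrier A" unfolding A_def amalg_simps using h by blast
  qed
  have ops: "x \<otimes>\<^bsub>A\<^esub> y = (fst x \<otimes>\<^bsub>R\<^esub> fst y, snd x \<otimes>\<^bsub>S\<^esub> snd y)"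
    "x \<oplus>\<^bsub>A\<^esub> y = (fst x \<oplus>\<^bsub>R\<^esub> fst y, snd x \<oplus>\<^bsub>S\<^esub> snd y)"
    "\<one>\<^bsub>A\<^esub> = (\<one>\<^bsub>R\<^esub>, \<one>\<^bsub>S\<^esub>)" "\<zero>\<^bsub>A\<^esub> = (\<zero>\<^bsub>R\<^esub>, \<zero>\<^bsub>S\<^esub>)" for x y
    unfolding A_def amalg_simps by simp_all
  have eqadd: "(a \<oplus>\<^bsub>S\<^esub> b) \<ominus>\<^bsub>S\<^esub> (c \<oplus>\<^bsub>S\<^esub> d) = (a \<ominus>\<^bsub>S\<^esub> c) \<oplus>\<^bsub>S\<^esub> (b \<ominus>\<^bsub>S\<^esub> d)"
    if "a \<in> carrier S" "b \<in> carrier S" "c \<in> carrier S" "d \<in> carrier S" for a b c d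
    using that by algebra
  have eqneg: "\<ominus>\<^bsub>S\<^esub> a \<ominus>\<^bsub>S\<^esub> (\<ominus>\<^bsub>S\<^esub> c) = \<ominus>\<^bsub>S\<^esub> (a \<ominus>\<^bsub>S\<^esub> c)"
    if "a \<in> carrier S" "c \<in> carrier S" for a c
    using that by algebra
  have eqmul: "(a \<otimes>\<^bsub>S\<^esub> b) \<ominus>\<^bsub>S\<^esub> (c \<otimes>\<^bsub>S\<^esub> d) = (a \<ominus>\<^bsub>S\<^esub> c) \<otimes>\<^bsub>S\<^esub> b \<oplus>\<^bsub>S\<^esub> c \<otimes>\<^bsub>S\<^esub> (b \<ominus>\<^bsub>S\<^esub> d)"
    if "a \<in> carrier S" "b \<in> carrier S" "c \<in> carrier S" "d \<in> carrier S" for a b c d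
    using that by algebra
  have minus_self: "a \<ominus>\<^bsub>S\<^esub> a = \<zero>\<^bsub>S\<^esub>" if "a \<in> carrier S" for a
    using that by algebra
  have cA: "cring A"
  proof (rule cringI)
    show "abelian_group A"
    proof (rule abelian_groupI)
      fix x y assume x: "x \<in> carrier A" and y: "y \<in> carrier A"
      from x y have h: "fst x \<in> carrier R" "snd x \<in> carrier S" "snd x \<ominus>\<^bsub>S\<^esub> f (fst x) \<in> J"
        "fst y \<in> carrier R" "snd y \<in> carrier S" "snd y \<ominus>\<^bsub>S\<^esub> f (fst y) \<in> J" by (simp_all add: mem)
      have fx: "f (fst x) \<in> carrier S" "f (fst y) \<in> carrier S" using h by simp_all
      have "(snd x \<oplus>\<^bsub>S\<^esub> snd y) \<ominus>\<^bsub>S\<^esub> f (fst x \<oplus>\<^bsub>R\<^esub> fst y)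
          = (snd x \<ominus>\<^bsub>S\<^esub> f (fst x)) \<oplus>\<^bsub>S\<^esub> (snd y \<ominus>\<^bsub>S\<^esub> f (fst y))"
        using h fx eqadd[of "snd x" "snd y" "f (fst x)" "f (fst y)"] by simp
      then show "x \<oplus>\<^bsub>A\<^esub> y \<in> carrier A" using h by (simp add: mem ops J.a_closed)
      show "x \<oplus>\<^bsub>A\<^esub> y = y \<oplus>\<^bsub>A\<^esub> x" using h by (simp add: ops R.a_comm S.a_comm)
    next
      show "\<zero>\<^bsub>A\<^esub> \<in> carrier A" by (simp add: mem ops J.zero_closed minus_self)
    next
      fix x y z assume "x \<in> carrier A" "y \<in> carrier A" "z \<in> carrier A"
      then show "x \<oplus>\<^bsub>A\<^esub> y \<oplus>\<^bsub>A\<^esub> z = x \<oplus>\<^bsub>A\<^esub> (y \<oplus>\<^bsub>A\<^esub> z)"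
        by (simp add: mem ops R.a_assoc S.a_assoc)
    next
      fix x assume "x \<in> carrier A"
      then show "\<zero>\<^bsub>A\<^esub> \<oplus>\<^bsub>A\<^esub> x = x" by (simp add: mem ops)
    next
      fix x assume x: "x \<in> carrier A"
      then have h: "fst x \<in> carrier R" "snd x \<in> carrier S" "snd x \<ominus>\<^bsub>S\<^esub> f (fst x) \<in> J"
        by (simp_all add: mem)
      have fx: "f (fst x) \<in> carrier S" using h by simp
      have "\<ominus>\<^bsub>S\<^esub> snd x \<ominus>\<^bsub>S\<^esub> f (\<ominus>\<^bsub>R\<^esub> fst x) = \<ominus>\<^bsub>S\<^esub> (snd x \<ominus>\<^bsub>S\<^esub> f (fst x))"
        using h fx eqneg[of "snd x" "f (fst x)"] by simp
      then have "(\<ominus>\<^bsub>R\<^esub> fst x, \<ominus>\<^bsub>S\<^esub> snd x) \<in> carrier A"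
        using h by (simp add: mem J.a_inv_closed)
      moreover have "(\<ominus>\<^bsub>R\<^esub> fst x, \<ominus>\<^bsub>S\<^esub> snd x) \<oplus>\<^bsub>A\<^esub> x = \<zero>\<^bsub>A\<^esub>"
        using h by (simp add: ops R.l_neg S.l_neg)
      ultimately show "\<exists>y\<in>carrier A. y \<oplus>\<^bsub>A\<^esub> x = \<zero>\<^bsub>A\<^esub>" by blast
    qed
  next
    show "comm_monoid A"
    proof (rule comm_monoidI)
      fix x y assume x: "x \<in> carrier A" and y: "y \<in> carrier A"
      from x y have h: "fst x \<in> carrier R" "snd x \<in> carrier S" "snd x \<ominus>\<^bsub>S\<^esub> f (fst x) \<in> J"
        "fst y \<in> carrier R" "snd y \<in> carrier S" "snd y \<ominus>\<^bsub>S\<^esub> f (fst y) \<in> J" by (simp_all add: mem)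
      have fx: "f (fst x) \<in> carrier S" "f (fst y) \<in> carrier S" using h by simp_all
      have "(snd x \<otimes>\<^bsub>S\<^esub> snd y) \<ominus>\<^bsub>S\<^esub> f (fst x \<otimes>\<^bsub>R\<^esub> fst y)
          = (snd x \<ominus>\<^bsub>S\<^esub> f (fst x)) \<otimes>\<^bsub>S\<^esub> snd y \<oplus>\<^bsub>S\<^esub> f (fst x) \<otimes>\<^bsub>S\<^esub> (snd y \<ominus>\<^bsub>S\<^esub> f (fst y))"
        using h fx eqmul[of "snd x" "snd y" "f (fst x)" "f (fst y)"] by simp
      moreover have "(snd x \<ominus>\<^bsub>S\<^esub> f (fst x)) \<otimes>\<^bsub>S\<^esub> snd y \<oplus>\<^bsub>S\<^esub> f (fst x) \<otimes>\<^bsub>S\<^esub> (snd y \<ominus>\<^bsub>S\<^esub> f (fst y)) \<in> J"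
        using h fx by (simp add: J.a_closed J.I_l_closed J.I_r_closed)
      ultimately show "x \<otimes>\<^bsub>A\<^esub> y \<in> carrier A" using h by (simp add: mem ops)
      show "x \<otimes>\<^bsub>A\<^esub> y = y \<otimes>\<^bsub>A\<^esub> x" using h by (simp add: ops R.m_comm S.m_comm)
    next
      show "\<one>\<^bsub>A\<^esub> \<in> carrier A" by (simp add: mem ops J.zero_closed minus_self)
    next
      fix x y z assume "x \<in> carrier A" "y \<in> carrier A" "z \<in> carrier A"
      then show "x \<otimes>\<^bsub>A\<^esub> y \<otimes>\<^bsub>A\<^esub> z = x \<otimes>\<^bsub>A\<^esub> (y \<otimes>\<^bsub>A\<^esub> z)"
        by (simp add: mem ops R.m_assoc S.m_assoc)
    next
      fix x assume "x \<in> carrier A"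
      then show "\<one>\<^bsub>A\<^esub> \<otimes>\<^bsub>A\<^esub> x = x" by (simp add: mem ops)
    qed
  next
    fix x y z assume "x \<in> carrier A" "y \<in> carrier A" "z \<in> carrier A"
    then show "(x \<oplus>\<^bsub>A\<^esub> y) \<otimes>\<^bsub>A\<^esub> z = x \<otimes>\<^bsub>A\<^esub> z \<oplus>\<^bsub>A\<^esub> y \<otimes>\<^bsub>A\<^esub> z"
      by (simp add: mem ops R.l_distr S.l_distr)
  qed
  have hp: "fst \<in> ring_hom A R"
    by (rule ring_hom_memI) (simp_all add: mem ops)
  have hs: "(\<lambda>r. (r, f r)) \<in> ring_hom R A"
    by (rule ring_hom_memI) (simp_all add: mem ops J.zero_closed minus_self)
  have unit: "\<exists>b\<in>carrier A. a \<otimes>\<^bsub>A\<^esub> b = \<one>\<^bsub>A\<^esub>" if a: "a \<in> carrier A" "fst a = \<one>\<^bsub>R\<^esub>" for a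
  proof -
    have h: "snd a \<in> carrier S" "snd a \<ominus>\<^bsub>S\<^esub> \<one>\<^bsub>S\<^esub> \<in> J" using a by (simp_all add: mem)
    define j where "j = snd a \<ominus>\<^bsub>S\<^esub> \<one>\<^bsub>S\<^esub>"
    have jJ: "j \<in> J" and jc: "j \<in> carrier S" using h J.Icarr unfolding j_def by auto
    have sa: "snd a = \<one>\<^bsub>S\<^esub> \<oplus>\<^bsub>S\<^esub> j" unfolding j_def using h by algebra
    obtain u where u: "u \<in> carrier S" "(\<one>\<^bsub>S\<^esub> \<oplus>\<^bsub>S\<^esub> j) \<otimes>\<^bsub>S\<^esub> u = \<one>\<^bsub>S\<^esub>"
      using S.jac_unit[of j] jJ JJ by blast
    have "u \<ominus>\<^bsub>S\<^esub> \<one>\<^bsub>S\<^esub> = u \<ominus>\<^bsub>S\<^esub> (\<one>\<^bsub>S\<^esub> \<oplus>\<^bsub>S\<^esub> j) \<otimes>\<^bsub>S\<^esub> u" using u(2) by simp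
    also have "\<dots> = \<ominus>\<^bsub>S\<^esub> (j \<otimes>\<^bsub>S\<^esub> u)" using u(1) jc by algebra
    finally have "u \<ominus>\<^bsub>S\<^esub> \<one>\<^bsub>S\<^esub> \<in> J" using jJ u(1) by (simp add: J.a_inv_closed J.I_r_closed)
    then have "(\<one>\<^bsub>R\<^esub>, u) \<in> carrier A" using u(1) by (simp add: mem)
    moreover have "a \<otimes>\<^bsub>A\<^esub> (\<one>\<^bsub>R\<^esub>, u) = \<one>\<^bsub>A\<^esub>" using a(2) sa u by (simp add: ops)
    ultimately show ?thesis by blast
  qed
  have "pm_ring A \<longleftrightarrow> pm_ring R"
    by (rule pm_transfer[OF cA R hp hs]) (use unit in auto)
  then show ?thesis unfolding A_def .
qed



lemma triv_simps:
  "carrier (triv_ext R M) = carrier R \<times> carrier M"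
  "x \<otimes>\<^bsub>triv_ext R M\<^esub> y = (fst x \<otimes>\<^bsub>R\<^esub> fst y, (fst x \<odot>\<^bsub>M\<^esub> snd y) \<oplus>\<^bsub>M\<^esub> (fst y \<odot>\<^bsub>M\<^esub> snd x))"
  "x \<oplus>\<^bsub>triv_ext R M\<^esub> y = (fst x \<oplus>\<^bsub>R\<^esub> fst y, snd x \<oplus>\<^bsub>M\<^esub> snd y)"
  "\<one>\<^bsub>triv_ext R M\<^esub> = (\<one>\<^bsub>R\<^esub>, \<zero>\<^bsub>M\<^esub>)"
  "\<zero>\<^bsub>triv_ext R M\<^esub> = (\<zero>\<^bsub>R\<^esub>, \<zero>\<^bsub>M\<^esub>)"
  by (simp_all add: triv_ext_def)

lemma triv_main:
  fixes R :: "'a ring" and M :: "('a, 'm) module"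
  assumes mo: "module R M"
  shows "pm_ring (triv_ext R M) \<longleftrightarrow> pm_ring R"
proof -
  have R: "cring R" using mo by (rule module.axioms(1))
  interpret R: cring R by (rule R)
  interpret MG: abelian_group M by (rule module.axioms(2)[OF mo])
  note sc = module.smult_closed[OF mo]
  note sld = module.smult_l_distr[OF mo]
  note srd = module.smult_r_distr[OF mo]
  note sa1 = module.smult_assoc1[OF mo]
  note s1 = module.smult_one[OF mo]
  note srn = module.smult_r_null[OF mo]
  define T where "T = triv_ext R M"
  have mem: "x \<in> carrier T \<longleftrightarrow> fst x \<in> carrier R \<and> snd x \<in> carrier M" for x
    unfolding T_def triv_simps by (cases x) simp
  have ops: "x \<otimes>\<^bsub>T\<^esub> y = (fst x \<otimes>\<^bsub>R\<^esub> fst y, (fst x \<odot>\<^bsub>M\<^esub> snd y) \<oplus>\<^bsub>M\<^esub> (fst y \<odot>\<^bsub>M\<^esub> snd x))"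
    "x \<oplus>\<^bsub>T\<^esub> y = (fst x \<oplus>\<^bsub>R\<^esub> fst y, snd x \<oplus>\<^bsub>M\<^esub> snd y)"
    "\<one>\<^bsub>T\<^esub> = (\<one>\<^bsub>R\<^esub>, \<zero>\<^bsub>M\<^esub>)" "\<zero>\<^bsub>T\<^esub> = (\<zero>\<^bsub>R\<^esub>, \<zero>\<^bsub>M\<^esub>)" for x y
    unfolding T_def triv_simps by simp_all
  have cT: "cring T"
  proof (rule cringI)
    show "abelian_group T"
    proof (rule abelian_groupI)
      fix x y assume "x \<in> carrier T" "y \<in> carrier T"
      then show "x \<oplus>\<^bsub>T\<^esub> y \<in> carrier T" "x \<oplus>\<^bsub>T\<^esub> y = y \<oplus>\<^bsub>T\<^esub> x"
        by (simp_all add: mem ops R.a_comm MG.a_comm)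
    next
      show "\<zero>\<^bsub>T\<^esub> \<in> carrier T" by (simp add: mem ops)
    next
      fix x y z assume "x \<in> carrier T" "y \<in> carrier T" "z \<in> carrier T"
      then show "x \<oplus>\<^bsub>T\<^esub> y \<oplus>\<^bsub>T\<^esub> z = x \<oplus>\<^bsub>T\<^esub> (y \<oplus>\<^bsub>T\<^esub> z)"
        by (simp add: mem ops R.a_assoc MG.a_assoc)
    next
      fix x assume "x \<in> carrier T"
      then show "\<zero>\<^bsub>T\<^esub> \<oplus>\<^bsub>T\<^esub> x = x" by (simp add: mem ops)
    next
      fix x assume x: "x \<in> carrier T"
      then have "(\<ominus>\<^bsub>R\<^esub> fst x, \<ominus>\<^bsub>M\<^esub> snd x) \<in> carrier T"
        "(\<ominus>\<^bsub>R\<^esub> fst x, \<ominus>\<^bsub>M\<^esub> snd x) \<oplus>\<^bsub>T\<^esub> x = \<zero>\<^bsub>T\<^esub>"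
        by (simp_all add: mem ops R.l_neg MG.l_neg)
      then show "\<exists>y\<in>carrier T. y \<oplus>\<^bsub>T\<^esub> x = \<zero>\<^bsub>T\<^esub>" by blast
    qed
  next
    show "comm_monoid T"
    proof (rule comm_monoidI)
      fix x y assume "x \<in> carrier T" "y \<in> carrier T"
      then show "x \<otimes>\<^bsub>T\<^esub> y \<in> carrier T" "x \<otimes>\<^bsub>T\<^esub> y = y \<otimes>\<^bsub>T\<^esub> x"
        by (simp_all add: mem ops sc R.m_comm MG.a_comm)
    next
      show "\<one>\<^bsub>T\<^esub> \<in> carrier T" by (simp add: mem ops)
    next
      fix x y z assume x: "x \<in> carrier T" and y: "y \<in> carrier T" and z: "z \<in> carrier T"
      obtain a m where xa: "x = (a, m)" by (cases x)
      obtain b n where yb: "y = (b, n)" by (cases y)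
      obtain c q where zc: "z = (c, q)" by (cases z)
      have h: "a \<in> carrier R" "m \<in> carrier M" "b \<in> carrier R" "n \<in> carrier M" "c \<in> carrier R" "q \<in> carrier M"
        using x y z xa yb zc by (simp_all add: mem)
      have e1: "(a \<otimes>\<^bsub>R\<^esub> b) \<odot>\<^bsub>M\<^esub> q \<oplus>\<^bsub>M\<^esub> c \<odot>\<^bsub>M\<^esub> (a \<odot>\<^bsub>M\<^esub> n \<oplus>\<^bsub>M\<^esub> b \<odot>\<^bsub>M\<^esub> m)
         = (a \<otimes>\<^bsub>R\<^esub> b) \<odot>\<^bsub>M\<^esub> q \<oplus>\<^bsub>M\<^esub> ((c \<otimes>\<^bsub>R\<^esub> a) \<odot>\<^bsub>M\<^esub> n \<oplus>\<^bsub>M\<^esub> (c \<otimes>\<^bsub>R\<^esub> b) \<odot>\<^bsub>M\<^esub> m)"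
        using h by (simp add: srd sc sa1)
      have e2: "a \<odot>\<^bsub>M\<^esub> (b \<odot>\<^bsub>M\<^esub> q \<oplus>\<^bsub>M\<^esub> c \<odot>\<^bsub>M\<^esub> n) \<oplus>\<^bsub>M\<^esub> (b \<otimes>\<^bsub>R\<^esub> c) \<odot>\<^bsub>M\<^esub> m
         = ((a \<otimes>\<^bsub>R\<^esub> b) \<odot>\<^bsub>M\<^esub> q \<oplus>\<^bsub>M\<^esub> (a \<otimes>\<^bsub>R\<^esub> c) \<odot>\<^bsub>M\<^esub> n) \<oplus>\<^bsub>M\<^esub> (b \<otimes>\<^bsub>R\<^esub> c) \<odot>\<^bsub>M\<^esub> m"
        using h by (simp add: srd sc sa1)
      have e3: "c \<otimes>\<^bsub>R\<^esub> a = a \<otimes>\<^bsub>R\<^esub> c" "c \<otimes>\<^bsub>R\<^esub> b = b \<otimes>\<^bsub>R\<^esub> c" using h R.m_comm by auto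
      show "x \<otimes>\<^bsub>T\<^esub> y \<otimes>\<^bsub>T\<^esub> z = x \<otimes>\<^bsub>T\<^esub> (y \<otimes>\<^bsub>T\<^esub> z)"
        using h e1 e2 e3 by (simp add: xa yb zc ops R.m_assoc sc MG.a_assoc)
    next
      fix x assume "x \<in> carrier T"
      then show "\<one>\<^bsub>T\<^esub> \<otimes>\<^bsub>T\<^esub> x = x" by (simp add: mem ops s1 srn)
    qed
  next
    fix x y z assume "x \<in> carrier T" "y \<in> carrier T" "z \<in> carrier T"
    then show "(x \<oplus>\<^bsub>T\<^esub> y) \<otimes>\<^bsub>T\<^esub> z = x \<otimes>\<^bsub>T\<^esub> z \<oplus>\<^bsub>T\<^esub> y \<otimes>\<^bsub>T\<^esub> z"
      by (simp add: mem ops R.l_distr sld srd sc MG.a_ac)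
  qed
  have hp: "fst \<in> ring_hom T R"
    by (rule ring_hom_memI) (simp_all add: mem ops)
  have hs: "(\<lambda>r. (r, \<zero>\<^bsub>M\<^esub>)) \<in> ring_hom R T"
    by (rule ring_hom_memI) (simp_all add: mem ops srn)
  have unit: "\<exists>b\<in>carrier T. a \<otimes>\<^bsub>T\<^esub> b = \<one>\<^bsub>T\<^esub>" if a: "a \<in> carrier T" "fst a = \<one>\<^bsub>R\<^esub>" for a
  proof -
    have h: "snd a \<in> carrier M" using a by (simp add: mem)
    have "(\<one>\<^bsub>R\<^esub>, \<ominus>\<^bsub>M\<^esub> snd a) \<in> carrier T" using h by (simp add: mem)
    moreover have "a \<otimes>\<^bsub>T\<^esub> (\<one>\<^bsub>R\<^esub>, \<ominus>\<^bsub>M\<^esub> snd a) = \<one>\<^bsub>T\<^esub>"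
      using h a(2) by (simp add: ops s1 MG.l_neg)
    ultimately show ?thesis by blast
  qed
  have "pm_ring T \<longleftrightarrow> pm_ring R"
    by (rule pm_transfer[OF cT R hp hs]) (use unit in auto)
  then show ?thesis unfolding T_def .
qed

theorem corollary3p6:
  fixes R :: "'a ring" and S :: "'b ring" and f :: "'a \<Rightarrow> 'b" and J :: "'b set"
  assumes "cring R" and "cring S" and "f \<in> ring_hom R S"
  shows "(ideal J S \<and> J \<noteq> {\<zero>\<^bsub>S\<^esub>} \<and> J \<noteq> carrier S \<and> J \<subseteq> Jac S \<longrightarrow>
            (pm_ring (amalg R S f J) \<longleftrightarrow> pm_ring R))
       \<and> (\<forall>M :: ('a, 'm) module. module R M \<longrightarrow> (pm_ring (triv_ext R M) \<longleftrightarrow> pm_ring R))"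
  using amalg_main[OF assms] triv_main by blast

end
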